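(* Let $K, L \subset \mathbb{R}^m$ be proper cones. Suppose that $K$ is an $L$-isotone projection set, and that at least one of the sets $\operatorname{int}(K^* )\cap L$ or $\operatorname{int}(K^* )\cap L^*$ is nonempty. Then $K$ is subdual and $K\subset L\subset K^*$.
   Context: $\mathbb{R}^m$ carries the standard inner product $\langle\cdot,\cdot\rangle$ and Euclidean norm. A convex cone $K$ is a nonempty set with $K+K\subset K$ and $tK\subset K$ for all $t\ge 0$; it is pointed if $K\cap(-K)=\{0\}$, generating if $K-K=\mathbb{R}^m$; a proper cone is a generating, closed, convex, pointed cone. The dual of $K$ is $K^*=\{y:\langle x,y\rangle\ge 0\ \forall x\in K\}$. $K$ is subdual if $K\subset K^*$. For a cone $L$, $x\le_L y$ means $y-x\in L$. For a nonempty closed convex set $D$, $P_D$ denotes the metric (nearest-point) projection onto $D$. $D$ is called an $L$-isotone projection set ($L$-isotone) if $x\le_L y$ implies $P_Dx\le_L P_Dy$ for all $x,y\in\mathbb{R}^m$. *)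

theory Defs
  imports "HOL-Analysis.Analysis"
begin

definition is_convex_cone :: "'a::euclidean_space set \<Rightarrow> bool" where
  "is_convex_cone K \<longleftrightarrow> K \<noteq> {} \<and> (\<forall>x\<in>K. \<forall>y\<in>K. x + y \<in> K) \<and> (\<forall>t::real. \<forall>x\<in>K. t \<ge> 0 \<longrightarrow> t *\<^sub>R x \<in> K)"

definition pointed_cone :: "'a::euclidean_space set \<Rightarrow> bool" where
  "pointed_cone K \<longleftrightarrow> K \<inter> uminus ` K = {0}"

definition generating_cone :: "'a::euclidean_space set \<Rightarrow> bool" where
  "generating_cone K \<longleftrightarrow> {x - y | x y. x \<in> K \<and> y \<in> K} = UNIV"

definition proper_cone :: "'a::euclidean_space set \<Rightarrow> bool" where
  "proper_cone K \<longleftrightarrow> is_convex_cone K \<and> generating_cone K \<and> closed K \<and> pointed_cone K"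

definition dual_cone :: "'a::euclidean_space set \<Rightarrow> 'a set" where
  "dual_cone K = {y. \<forall>x\<in>K. inner x y \<ge> 0}"

definition subdual :: "'a::euclidean_space set \<Rightarrow> bool" where
  "subdual K \<longleftrightarrow> K \<subseteq> dual_cone K"

definition cone_le :: "'a::euclidean_space set \<Rightarrow> 'a \<Rightarrow> 'a \<Rightarrow> bool" where
  "cone_le L x y \<longleftrightarrow> y - x \<in> L"

(* metric projection P_D = closest_point D (D nonempty closed convex) *)
definition isotone_projection_set :: "'a::euclidean_space set \<Rightarrow> 'a set \<Rightarrow> bool" where
  "isotone_projection_set L D \<longleftrightarrow>
     (\<forall>x y. cone_le L x y \<longrightarrow> cone_le L (closest_point D x) (closest_point D y))"

end

theory Submission
  imports Defs
begin

lemma cone_zero: "is_convex_cone K \<Longrightarrow> 0 \<in> K"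
  unfolding is_convex_cone_def by (metis all_not_in_conv order_refl scaleR_zero_left)

lemma cone_convex: assumes "is_convex_cone K" shows "convex K"
  unfolding convex_def using assms unfolding is_convex_cone_def by blast

lemma cone_scale: "is_convex_cone K \<Longrightarrow> x \<in> K \<Longrightarrow> (t::real) \<ge> 0 \<Longrightarrow> t *\<^sub>R x \<in> K"
  unfolding is_convex_cone_def by blast

lemma proj_zero_dot:
  assumes "proper_cone K" "closest_point K z = 0" "k \<in> K"
  shows "inner z k \<le> 0"
proof -
  have c: "is_convex_cone K" "closed K" using assms(1) unfolding proper_cone_def by auto
  have "inner (z - closest_point K z) (k - closest_point K z) \<le> 0"
    by (rule closest_point_dot[OF cone_convex[OF c(1)] c(2) assms(3)])
  thus ?thesis using assms(2) by simp
qed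

lemma proj_zero:
  assumes "proper_cone K" "\<forall>k\<in>K. inner z k \<le> 0"
  shows "closest_point K z = 0"
proof -
  have c: "is_convex_cone K" "closed K" using assms(1) unfolding proper_cone_def by auto
  have "\<forall>k\<in>K. dist z 0 \<le> dist z k"
  proof
    fix k assume k: "k \<in> K"
    have "(dist z k)^2 = (norm z)^2 - 2 * inner z k + (norm k)^2"
      by (simp add: dist_norm power2_norm_eq_inner inner_diff_left inner_diff_right inner_commute)
    also have "\<dots> \<ge> (norm z)^2" using bspec[OF assms(2) k] zero_le_power2[of "norm k"] by linarith
    finally have "(dist z 0)^2 \<le> (dist z k)^2" by simp
    thus "dist z 0 \<le> dist z k" using power2_le_imp_le[OF _ zero_le_dist] by blast
  qed
  from closest_point_unique[OF cone_convex[OF c(1)] c(2) cone_zero[OF c(1)] this]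
  show ?thesis by (rule sym)
qed

lemma int_bound:
  assumes "u \<in> interior (dual_cone K)"
  shows "\<exists>c>0. \<forall>k\<in>K. inner k u \<ge> c * norm k"
proof -
  obtain e where e: "e > 0" "ball u e \<subseteq> dual_cone K"
    using assms mem_interior by blast
  have "\<forall>k\<in>K. inner k u \<ge> (e/2) * norm k"
  proof
    fix k assume k: "k \<in> K"
    show "inner k u \<ge> (e/2) * norm k"
    proof (cases "k = 0")
      case True thus ?thesis by simp
    next
      case False
      define v where "v = u - (e/2/norm k) *\<^sub>R k"
      have "dist u v = e/2" using False e(1) by (simp add: v_def dist_norm)
      hence "v \<in> dual_cone K" using e by auto
      hence "inner k v \<ge> 0" using k unfolding dual_cone_def by auto
      moreover have "inner k v = inner k u - (e/2/norm k) * (norm k)^2"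
        by (simp add: v_def inner_diff_right power2_norm_eq_inner)
      moreover have "(e/2/norm k) * (norm k)^2 = (e/2) * norm k"
        using False by (simp add: power2_eq_square)
      ultimately show ?thesis by linarith
    qed
  qed
  thus ?thesis using e(1) by (intro exI[of _ "e/2"]) auto
qed

theorem theorem4:
  fixes K L :: "'a::euclidean_space set"
  assumes "proper_cone K" and "proper_cone L"
    and "isotone_projection_set L K"
    and "interior (dual_cone K) \<inter> L \<noteq> {} \<or> interior (dual_cone K) \<inter> dual_cone L \<noteq> {}"
  shows "subdual K \<and> K \<subseteq> L \<and> L \<subseteq> dual_cone K"
proof -
  define P where "P = closest_point K"
  have iso: "\<And>x y. y - x \<in> L \<Longrightarrow> P y - P x \<in> L"
    using assms(3) unfolding isotone_projection_set_def cone_le_def P_def by blast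
  have cK: "is_convex_cone K" "closed K" using assms(1) unfolding proper_cone_def by auto
  have cL: "is_convex_cone L" "pointed_cone L" "generating_cone L"
    using assms(2) unfolding proper_cone_def by auto
  have ptL: "\<And>w. w \<in> L \<Longrightarrow> -w \<in> L \<Longrightarrow> w = 0"
  proof -
    fix w assume "w \<in> L" "-w \<in> L"
    hence "w \<in> L \<inter> uminus ` L" by (metis IntI image_eqI minus_minus)
    thus "w = 0" using cL(2) unfolding pointed_cone_def by blast
  qed
  have P0: "P 0 = 0" unfolding P_def using closest_point_self[OF cone_zero[OF cK(1)]] .
  have stepA: "L \<subseteq> dual_cone K" if h: "\<And>w. w \<in> K \<Longrightarrow> -w \<in> L \<Longrightarrow> w = 0"
  proof
    fix y assume y: "y \<in> L"
    have "P 0 - P (-y) \<in> L" using iso[where x="-y" and y=0] y by simp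
    hence "- P (-y) \<in> L" using P0 by simp
    moreover have "P (-y) \<in> K" unfolding P_def
      using closest_point_in_set[OF cK(2)] cone_zero[OF cK(1)] by blast
    ultimately have "P (-y) = 0" using h by blast
    hence "\<forall>k\<in>K. inner (-y) k \<le> 0" using proj_zero_dot[OF assms(1)] unfolding P_def by blast
    thus "y \<in> dual_cone K" unfolding dual_cone_def by (simp add: inner_commute)
  qed
  have stepB: "K \<subseteq> L" if h: "L \<subseteq> dual_cone K"
  proof
    fix x assume x: "x \<in> K"
    obtain a b where ab: "x = a - b" "a \<in> L" "b \<in> L"
      using cL(3) unfolding generating_cone_def by blast
    have "\<forall>k\<in>K. inner (-b) k \<le> 0" using h ab(3) unfolding dual_cone_def
      by (auto simp: inner_commute)
    hence "P (-b) = 0" unfolding P_def using proj_zero[OF assms(1)] by blast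
    moreover have "P x - P (-b) \<in> L" using iso[where x="-b" and y=x] ab by simp
    moreover have "P x = x" unfolding P_def using closest_point_self[OF x] .
    ultimately show "x \<in> L" by simp
  qed
  have main: "K \<subseteq> L \<and> L \<subseteq> dual_cone K"
    using assms(4)
  proof
    assume "interior (dual_cone K) \<inter> L \<noteq> {}"
    then obtain u where u: "u \<in> interior (dual_cone K)" "u \<in> L" by blast
    obtain c where c: "c > 0" "\<forall>k\<in>K. inner k u \<ge> c * norm k"
      using int_bound[OF u(1)] by blast
    have KL: "K \<subseteq> L"
    proof
      fix x assume x: "x \<in> K"
      define s where "s = norm x / c"
      have s0: "s \<ge> 0" using c by (simp add: s_def)
      have "\<forall>k\<in>K. inner (x - s *\<^sub>R u) k \<le> 0"
      proof
        fix k assume k: "k \<in> K"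
        have "inner x k \<le> norm x * norm k" by (rule norm_cauchy_schwarz)
        moreover have "s * inner k u \<ge> s * (c * norm k)" using c k s0 by (simp add: mult_left_mono)
        moreover have "s * (c * norm k) = norm x * norm k" using c by (simp add: s_def)
        ultimately show "inner (x - s *\<^sub>R u) k \<le> 0"
          by (simp add: inner_diff_left inner_diff_right inner_commute)
      qed
      hence "P (x - s *\<^sub>R u) = 0" unfolding P_def using proj_zero[OF assms(1)] by blast
      moreover have "P x - P (x - s *\<^sub>R u) \<in> L"
        using iso[where x="x - s *\<^sub>R u" and y=x] cone_scale[OF cL(1) u(2) s0] by simp
      moreover have "P x = x" unfolding P_def using closest_point_self[OF x] .
      ultimately show "x \<in> L" by simp
    qed
    have "L \<subseteq> dual_cone K" using stepA KL ptL by blast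
    thus ?thesis using KL by blast
  next
    assume "interior (dual_cone K) \<inter> dual_cone L \<noteq> {}"
    then obtain u where u: "u \<in> interior (dual_cone K)" "u \<in> dual_cone L" by blast
    obtain c where c: "c > 0" "\<forall>k\<in>K. inner k u \<ge> c * norm k"
      using int_bound[OF u(1)] by blast
    have "L \<subseteq> dual_cone K"
    proof (rule stepA)
      fix w assume w: "w \<in> K" "-w \<in> L"
      have "inner (-w) u \<ge> 0" using u(2) w(2) unfolding dual_cone_def by blast
      hence "c * norm w \<le> 0" using c w(1) by force
      thus "w = 0" using c(1) by (simp add: mult_le_0_iff)
    qed
    thus ?thesis using stepB by blast
  qed
  thus ?thesis unfolding subdual_def by blast
qed

end
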